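(* Let $\phi:\Delta\to\mathbb R$ be continuous. Then the function $g:\Delta\to\mathbb R$ given by $g(x)=\max_{y\in\Delta,\,y\trianglerighteq x}\phi(y)$ is continuous.
   Context: Fix $\theta\in\{2,3,\dots\}$. $\Delta=\{x\in[0,1]^\theta:x_1\ge\dots\ge x_\theta,\ \sum_i x_i=1\}$. For $x,y\in\Delta$, $y\trianglerighteq x$ means $y_1+\dots+y_i\ge x_1+\dots+x_i$ for all $i$. *)

theory Defs
  imports "HOL-Analysis.Analysis"
begin

text \<open>Points of the ordered simplex are represented as functions nat => real
  (coordinates x 0, ..., x (theta-1)), vanishing outside {0..<theta}, so that the
  product topology on nat => real restricted to Delta is the Euclidean one.\<close>

definition ordsimplex :: "nat \<Rightarrow> (nat \<Rightarrow> real) set" where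
  "ordsimplex \<theta> = {x. (\<forall>i. i \<ge> \<theta> \<longrightarrow> x i = 0)
      \<and> (\<forall>i<\<theta>. 0 \<le> x i \<and> x i \<le> 1)
      \<and> (\<forall>i j. i \<le> j \<and> j < \<theta> \<longrightarrow> x j \<le> x i)
      \<and> (\<Sum>i<\<theta>. x i) = 1}"

definition majorizes :: "nat \<Rightarrow> (nat \<Rightarrow> real) \<Rightarrow> (nat \<Rightarrow> real) \<Rightarrow> bool" where
  "majorizes \<theta> y x \<longleftrightarrow> (\<forall>i\<in>{1..\<theta>}. (\<Sum>k<i. x k) \<le> (\<Sum>k<i. y k))"

end

theory Submission
  imports Defs
begin

lemma box_compact: "compact (Pi UNIV (\<lambda>_::nat. {0..1::real}))"
proof -
  have "compactin (product_topology (\<lambda>_. euclidean) UNIV) (PiE UNIV (\<lambda>_::nat. {0..1::real}))"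
    by (simp add: compactin_PiE)
  moreover have "PiE UNIV (\<lambda>_::nat. {0..1::real}) = Pi UNIV (\<lambda>_::nat. {0..1::real})" by (simp add: PiE_def extensional_def)
  ultimately show ?thesis by (simp add: euclidean_product_topology)
qed

lemma cont_comp: "continuous_on UNIV (\<lambda>x::nat\<Rightarrow>real. (\<Sum>k<i. x k))"
  by (intro continuous_intros continuous_on_product_coordinates)

lemma closed_simplex: "closed (ordsimplex \<theta>)"
  unfolding ordsimplex_def
  by (intro closed_Collect_conj closed_Collect_all closed_Collect_imp closed_Collect_le
      closed_Collect_eq continuous_intros continuous_on_product_coordinates cont_comp) auto

lemma compact_simplex: "compact (ordsimplex \<theta>)"
proof -
  have "ordsimplex \<theta> = Pi UNIV (\<lambda>_::nat. {0..1::real}) \<inter> ordsimplex \<theta>"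
    by (auto simp: ordsimplex_def) (metis linorder_not_le order_refl zero_le_one)+
  then show ?thesis using box_compact closed_simplex by (metis compact_Int_closed)
qed

lemma simplex_nonneg: "x \<in> ordsimplex \<theta> \<Longrightarrow> 0 \<le> x k"
  unfolding ordsimplex_def by (cases "k < \<theta>") auto

lemma simplex_psum_theta: "x \<in> ordsimplex \<theta> \<Longrightarrow> \<theta> \<le> i \<Longrightarrow> (\<Sum>k<i. x k) = 1"
proof -
  assume x: "x \<in> ordsimplex \<theta>" and i: "\<theta> \<le> i"
  have "(\<Sum>k<i. x k) = (\<Sum>k<\<theta>. x k) + (\<Sum>k\<in>{\<theta>..<i}. x k)"
    using i by (metis atLeast0LessThan sum.atLeastLessThan_concat zero_le)
  also have "(\<Sum>k\<in>{\<theta>..<i}. x k) = 0" using x by (auto simp: ordsimplex_def)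
  finally show ?thesis using x by (simp add: ordsimplex_def)
qed

lemma simplex_psum_le1: "x \<in> ordsimplex \<theta> \<Longrightarrow> (\<Sum>k<i. x k) \<le> 1"
proof (cases "\<theta> \<le> i")
  case True assume "x \<in> ordsimplex \<theta>" then show ?thesis using True simplex_psum_theta by simp
next
  case False assume x: "x \<in> ordsimplex \<theta>"
  have "(\<Sum>k<i. x k) \<le> (\<Sum>k<\<theta>. x k)"
    using False by (intro sum_mono2) (auto simp: simplex_nonneg[OF x])
  then show ?thesis using simplex_psum_theta[OF x, of \<theta>] by simp
qed

lemma simplex_psum_ge0: "x \<in> ordsimplex \<theta> \<Longrightarrow> 0 \<le> (\<Sum>k<i. x k)"
  by (simp add: simplex_nonneg sum_nonneg)

definition PP :: "(nat \<Rightarrow> real) \<Rightarrow> real \<Rightarrow> nat \<Rightarrow> real" where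
  "PP y e i = (if i = 0 then 0 else min 1 ((\<Sum>k<i. y k) + e))"

definition TT :: "nat \<Rightarrow> (nat \<Rightarrow> real) \<Rightarrow> real \<Rightarrow> nat \<Rightarrow> real" where
  "TT \<theta> y e k = (if k < \<theta> then PP y e (Suc k) - PP y e k else 0)"

lemma TT_psum: "i \<le> \<theta> \<Longrightarrow> (\<Sum>k<i. TT \<theta> y e k) = PP y e i"
proof -
  assume "i \<le> \<theta>"
  then have "(\<Sum>k<i. TT \<theta> y e k) = (\<Sum>k<i. PP y e (Suc k) - PP y e k)"
    by (intro sum.cong) (auto simp: TT_def)
  also have "\<dots> = PP y e i - PP y e 0" by (rule sum_lessThan_telescope)
  also have "\<dots> = PP y e i" by (simp add: PP_def)
  finally show ?thesis .
qed

lemma PP_mono: "y \<in> ordsimplex \<theta> \<Longrightarrow> 0 \<le> e \<Longrightarrow> PP y e k \<le> PP y e (Suc k)"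
  using simplex_nonneg[of y \<theta> k] simplex_psum_ge0[of y \<theta> k]
  by (auto simp: PP_def)

lemma TT_step: assumes y: "y \<in> ordsimplex \<theta>" and e: "0 \<le> e" and k: "Suc k < \<theta>"
  shows "TT \<theta> y e (Suc k) \<le> TT \<theta> y e k"
proof -
  have o: "y (Suc k) \<le> y k" using y k unfolding ordsimplex_def by auto
  have n: "0 \<le> y (Suc k)" "0 \<le> y k" using simplex_nonneg[OF y] by auto
  define a where "a = (\<Sum>j<k. y j)"
  have a0: "0 \<le> a" unfolding a_def using simplex_psum_ge0[OF y] .
  have s1: "(\<Sum>j<Suc k. y j) = a + y k" by (simp add: a_def)
  have s2: "(\<Sum>j<Suc (Suc k). y j) = a + y k + y (Suc k)" by (simp add: a_def)
  have le1: "a + y k \<le> 1" using simplex_psum_le1[OF y, of "Suc k"] s1 by simp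
  show ?thesis
  proof (cases k)
    case 0
    then have "a = 0" by (simp add: a_def)
    then show ?thesis using 0 k o n e le1 s1 s2 by (simp add: TT_def PP_def min_def)
  next
    case (Suc m)
    then show ?thesis using k o n e le1 s1 s2 a0
      by (auto simp: TT_def PP_def min_def a_def)
  qed
qed

lemma TT_in: assumes y: "y \<in> ordsimplex \<theta>" and e: "0 \<le> e" and th: "1 \<le> \<theta>"
  shows "TT \<theta> y e \<in> ordsimplex \<theta>"
proof -
  have nn: "0 \<le> TT \<theta> y e k" for k using PP_mono[OF y e, of k] by (simp add: TT_def)
  have le: "TT \<theta> y e k \<le> 1" for k
    using simplex_psum_ge0[OF y, of k] e by (auto simp: TT_def PP_def)
  have ord: "i \<le> j \<Longrightarrow> j < \<theta> \<longrightarrow> TT \<theta> y e j \<le> TT \<theta> y e i" for i j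
  proof (induction j rule: dec_induct)
    case base then show ?case by simp
  next
    case (step n) then show ?case using TT_step[OF y e, of n] by auto
  qed
  have sm: "(\<Sum>k<\<theta>. TT \<theta> y e k) = 1"
    using TT_psum[of \<theta> \<theta> y e] simplex_psum_theta[OF y, of \<theta>] e th by (simp add: PP_def)
  have z: "\<theta> \<le> i \<Longrightarrow> TT \<theta> y e i = 0" for i by (simp add: TT_def)
  show ?thesis unfolding ordsimplex_def using nn le ord sm z by auto
qed

lemma TT_zero: assumes y: "y \<in> ordsimplex \<theta>" shows "TT \<theta> y 0 = y"
proof
  fix k
  have "PP y 0 i = (\<Sum>j<i. y j)" for i using simplex_psum_le1[OF y, of i] by (simp add: PP_def)
  then show "TT \<theta> y 0 k = y k" using y by (auto simp: TT_def ordsimplex_def)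
qed

lemma TT_maj: assumes y: "y \<in> ordsimplex \<theta>" and e: "0 \<le> e" and x: "x \<in> ordsimplex \<theta>"
  and h: "\<And>i. i \<in> {1..\<theta>} \<Longrightarrow> (\<Sum>k<i. x k) \<le> (\<Sum>k<i. y k) + e"
  shows "majorizes \<theta> (TT \<theta> y e) x"
  unfolding majorizes_def
proof
  fix i assume i: "i \<in> {1..\<theta>}"
  then have "(\<Sum>k<i. TT \<theta> y e k) = min 1 ((\<Sum>k<i. y k) + e)" by (simp add: TT_psum PP_def)
  then show "(\<Sum>k<i. x k) \<le> (\<Sum>k<i. TT \<theta> y e k)" using h[OF i] simplex_psum_le1[OF x, of i] by simp
qed

lemma TT_cont: "continuous_on UNIV (\<lambda>e. TT \<theta> y e)"
  apply (intro continuous_on_coordinatewise_then_product)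
  subgoal for k unfolding TT_def PP_def by (cases "k < \<theta>"; cases "k = 0") (auto intro!: continuous_intros)
  done


lemma closed_maj_set: "closed {y. majorizes \<theta> y x}"
  unfolding majorizes_def Ball_def
  by (intro closed_Collect_all closed_Collect_imp closed_Collect_le continuous_intros cont_comp) auto

lemma maximizer:
  fixes \<phi> :: "(nat \<Rightarrow> real) \<Rightarrow> real"
  assumes x: "x \<in> ordsimplex \<theta>" and c: "continuous_on (ordsimplex \<theta>) \<phi>"
  shows "\<exists>y. y \<in> ordsimplex \<theta> \<and> majorizes \<theta> y x \<and>
     (\<forall>z\<in>ordsimplex \<theta>. majorizes \<theta> z x \<longrightarrow> \<phi> z \<le> \<phi> y) \<and>
     (GREATEST v. v \<in> \<phi> ` {y \<in> ordsimplex \<theta>. majorizes \<theta> y x}) = \<phi> y"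
proof -
  let ?M = "{y \<in> ordsimplex \<theta>. majorizes \<theta> y x}"
  have "?M = ordsimplex \<theta> \<inter> {y. majorizes \<theta> y x}" by auto
  then have cM: "compact ?M" using compact_simplex closed_maj_set by (metis compact_Int_closed)
  have "x \<in> ?M" using x by (auto simp: majorizes_def)
  then have ne: "?M \<noteq> {}" by blast
  have "continuous_on ?M \<phi>" using c by (rule continuous_on_subset) auto
  from continuous_attains_sup[OF cM ne this] obtain y where y: "y \<in> ?M" "\<forall>z\<in>?M. \<phi> z \<le> \<phi> y" by blast
  have "(GREATEST v. v \<in> \<phi> ` ?M) = \<phi> y"
    by (rule Greatest_equality) (use y in auto)
  then show ?thesis using y by auto
qed

theorem lemma3p3:
  fixes \<theta> :: nat and \<phi> g :: "(nat \<Rightarrow> real) \<Rightarrow> real"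
  assumes "\<theta> \<ge> 2"
    and "continuous_on (ordsimplex \<theta>) \<phi>"
    and "\<And>x. x \<in> ordsimplex \<theta> \<Longrightarrow>
           g x = (GREATEST v. v \<in> \<phi> ` {y \<in> ordsimplex \<theta>. majorizes \<theta> y x})"
  shows "continuous_on (ordsimplex \<theta>) g"
proof -
  let ?D = "ordsimplex \<theta>"
  have gmax: "\<exists>y\<in>?D. majorizes \<theta> y x \<and> (\<forall>z\<in>?D. majorizes \<theta> z x \<longrightarrow> \<phi> z \<le> \<phi> y) \<and> g x = \<phi> y"
    if x: "x \<in> ?D" for x
    using maximizer[OF x assms(2)] assms(3)[OF x] by auto
  have gge: "\<phi> z \<le> g x" if "x \<in> ?D" "z \<in> ?D" "majorizes \<theta> z x" for x z
    using gmax[OF that(1)] that by auto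
  have closedC: "closed {x \<in> ?D. c \<le> g x}" for c
  proof -
    let ?K = "((?D \<times> ?D) \<inter> (\<lambda>p. \<phi> (snd p)) -` {c..}) \<inter> {p. majorizes \<theta> (snd p) (fst p)}"
    have cl1: "closed ((?D \<times> ?D) \<inter> (\<lambda>p. \<phi> (snd p)) -` {c..})"
    proof (rule continuous_closed_preimage)
      show "continuous_on (?D \<times> ?D) (\<lambda>p. \<phi> (snd p))"
        by (rule continuous_on_compose2[OF assms(2)]) (auto intro: continuous_intros)
    qed (auto intro: closed_Times closed_simplex)
    have cl2: "closed {p::(nat\<Rightarrow>real)\<times>(nat\<Rightarrow>real). majorizes \<theta> (snd p) (fst p)}"
      unfolding majorizes_def Ball_def
      by (intro closed_Collect_all closed_Collect_imp closed_Collect_le continuous_intros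
            continuous_on_compose2[OF cont_comp]) auto
    have "compact ((?D \<times> ?D) \<inter> ((?D \<times> ?D) \<inter> (\<lambda>p. \<phi> (snd p)) -` {c..} \<inter> {p. majorizes \<theta> (snd p) (fst p)}))"
      by (intro compact_Int_closed compact_Times compact_simplex closed_Int cl1 cl2)
    moreover have "(?D \<times> ?D) \<inter> ((?D \<times> ?D) \<inter> (\<lambda>p. \<phi> (snd p)) -` {c..} \<inter> {p. majorizes \<theta> (snd p) (fst p)}) = ?K"
      by blast
    ultimately have "compact ?K" by simp
    then have "compact (fst ` ?K)"
      by (rule compact_continuous_image[OF continuous_on_fst[OF continuous_on_id]])
    moreover have "fst ` ?K = {x \<in> ?D. c \<le> g x}"
    proof
      show "fst ` ?K \<subseteq> {x \<in> ?D. c \<le> g x}"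
      proof
        fix x assume "x \<in> fst ` ?K"
        then obtain y where "(x, y) \<in> ?K" by force
        then have "x \<in> ?D" "y \<in> ?D" "majorizes \<theta> y x" "c \<le> \<phi> y" by auto
        then show "x \<in> {x \<in> ?D. c \<le> g x}" using gge[of x y] by auto
      qed
      show "{x \<in> ?D. c \<le> g x} \<subseteq> fst ` ?K"
      proof
        fix x assume "x \<in> {x \<in> ?D. c \<le> g x}"
        then have x: "x \<in> ?D" "c \<le> g x" by auto
        obtain y where "y \<in> ?D" "majorizes \<theta> y x" "g x = \<phi> y" using gmax[OF x(1)] by auto
        then have "(x, y) \<in> ?K" using x by auto
        then show "x \<in> fst ` ?K" by force
      qed
    qed
    ultimately show ?thesis using compact_imp_closed by metis
  qed
  show ?thesis
    unfolding continuous_on_def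
  proof (intro ballI order_tendstoI)
    fix x a assume x: "x \<in> ?D" and a: "g x < a"
    have "open (- {x \<in> ?D. a \<le> g x})" using closedC by auto
    moreover have "x \<in> - {x \<in> ?D. a \<le> g x}" using a by auto
    ultimately have "eventually (\<lambda>x'. x' \<in> - {x \<in> ?D. a \<le> g x}) (nhds x)"
      by (rule eventually_nhds_in_open)
    then show "eventually (\<lambda>x'. g x' < a) (at x within ?D)"
      unfolding eventually_at_filter by (rule eventually_mono) auto
  next
    fix x a assume x: "x \<in> ?D" and a: "a < g x"
    obtain y where y: "y \<in> ?D" "majorizes \<theta> y x" "g x = \<phi> y" using gmax[OF x] by auto
    define e where "e x' = (\<Sum>i<Suc \<theta>. \<bar>(\<Sum>k<i. x' k) - (\<Sum>k<i. x k)\<bar>)" for x'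
    have e0: "0 \<le> e x'" for x' unfolding e_def by (simp add: sum_nonneg)
    have ex: "e x = 0" by (simp add: e_def)
    have econt: "continuous_on UNIV e"
      unfolding e_def by (intro continuous_intros cont_comp)
    have th1: "1 \<le> \<theta>" using assms(1) by simp
    let ?h = "\<lambda>x'. \<phi> (TT \<theta> y (e x'))"
    have hcont: "continuous_on ?D ?h"
      by (rule continuous_on_compose2[OF assms(2)])
         (auto intro!: continuous_on_compose2[OF TT_cont] continuous_on_subset[OF econt] TT_in[OF y(1) e0 th1])
    have hx: "?h x = g x" using ex TT_zero[OF y(1)] y(3) by simp
    have "(?h \<longlongrightarrow> ?h x) (at x within ?D)" using hcont x unfolding continuous_on_def by blast
    then have "eventually (\<lambda>x'. a < ?h x') (at x within ?D)"
      using a hx by (auto dest: order_tendstoD)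
    moreover have "eventually (\<lambda>x'. x' \<in> ?D) (at x within ?D)"
      by (simp add: eventually_at_filter)
    ultimately show "eventually (\<lambda>x'. a < g x') (at x within ?D)"
    proof (rule eventually_elim2)
      fix x' assume h: "a < ?h x'" and x': "x' \<in> ?D"
      have "majorizes \<theta> (TT \<theta> y (e x')) x'"
      proof (rule TT_maj[OF y(1) e0 x'])
        fix i assume i: "i \<in> {1..\<theta>}"
        have "\<bar>(\<Sum>k<i. x' k) - (\<Sum>k<i. x k)\<bar> \<le> e x'"
          unfolding e_def using i
          by (intro member_le_sum[where f = "\<lambda>i. \<bar>(\<Sum>k<i. x' k) - (\<Sum>k<i. x k)\<bar>"]) auto
        moreover have "(\<Sum>k<i. x k) \<le> (\<Sum>k<i. y k)" using y(2) i by (auto simp: majorizes_def)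
        ultimately show "(\<Sum>k<i. x' k) \<le> (\<Sum>k<i. y k) + e x'" by linarith
      qed
      then have "?h x' \<le> g x'" using gge[OF x' TT_in[OF y(1) e0 th1]] by blast
      then show "a < g x'" using h by linarith
    qed
  qed
qed

end
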